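(* Let $\beta$, $\Omega$, $\mathcal H_\eta$ and $a_{s\beta,\eta}$ be as in the context. There is a constant $C_\beta$ such that for all $\varepsilon\in(0,1)$, $\eta\in[-\pi,\pi]$ and $U\in\mathcal H_\eta$, $$\big|a_{\varepsilon\beta,\eta}[U]-a_{0,\eta}[U]\big|\le C_\beta\,\varepsilon\,\|\nabla U\|_\Omega^2.$$
   Context: $\omega\subset\mathbb{R}^2$ is a bounded domain with piecewise $C^2$ boundary without cusps; $\gamma_D\subset\partial\omega$ is a finite union of arcs of positive measure. $\partial_\varphi=x_1\partial_2-x_2\partial_1$. $\beta\in C^2(\mathbb{R})$ has positive $1$-periodic derivative $\dot\beta$. $\Omega=\omega\times(0,1)$; for $\eta\in[-\pi,\pi]$, $\mathcal H_\eta$ is the space of $U\in H^1(\Omega)$ vanishing on $\gamma_D\times(0,1)$ with $U(x',1)=e^{i\eta}U(x',0)$. For $s\in\mathbb{R}$, $a_{s\beta,\eta}[U]=\int_\Omega\big(|\nabla'U|^2+|(\partial_3+s\dot\beta(x_3)\partial_\varphi)U|^2\big)\mathrm{d}x$, $U\in\mathcal H_\eta$; $\|\cdot\|_\Omega$ is the $L^2(\Omega)$ norm. *)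

theory Defs
  imports "HOL-Analysis.Analysis"
begin

text \<open>Points of the plane are pairs (x1,x2); points of R^3 are ((x1,x2),x3).\<close>
type_synonym pt2 = "real \<times> real"
type_synonym pt3 = "(real \<times> real) \<times> real"

definition C2_regular_arc :: "(real \<Rightarrow> pt2) \<Rightarrow> bool" where
  "C2_regular_arc g \<longleftrightarrow> arc g \<and>
     (\<exists>g1 g2. (\<forall>t. (g has_vector_derivative g1 t) (at t)) \<and>
              (\<forall>t. (g1 has_vector_derivative g2 t) (at t)) \<and>
              continuous_on UNIV g2 \<and> (\<forall>t\<in>{0..1}. g1 t \<noteq> 0))"

text \<open>Arc ends: (k, True) is the start of arc k, (k, False) its finish.\<close>
definition arc_end_pt :: "(nat \<Rightarrow> real \<Rightarrow> pt2) \<Rightarrow> nat \<times> bool \<Rightarrow> pt2" where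
  "arc_end_pt g e = (if snd e then g (fst e) 0 else g (fst e) 1)"

text \<open>Outgoing tangent direction at an arc end.\<close>
definition arc_end_tangent :: "(nat \<Rightarrow> real \<Rightarrow> pt2) \<Rightarrow> nat \<times> bool \<Rightarrow> pt2" where
  "arc_end_tangent g e = (if snd e then vector_derivative (g (fst e)) (at 0)
                          else - vector_derivative (g (fst e)) (at 1))"

definition pw_C2_boundary_no_cusps :: "pt2 set \<Rightarrow> bool" where
  "pw_C2_boundary_no_cusps \<omega> \<longleftrightarrow>
     interior (closure \<omega>) = \<omega> \<and>
     (\<exists>n::nat. \<exists>g :: nat \<Rightarrow> real \<Rightarrow> pt2. 0 < n \<and>
        (\<forall>k<n. C2_regular_arc (g k)) \<and>
        frontier \<omega> = (\<Union>k<n. path_image (g k)) \<and>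
        (\<forall>k<n. \<forall>l<n. k \<noteq> l \<longrightarrow>
            path_image (g k) \<inter> path_image (g l) \<subseteq> {pathstart (g k), pathfinish (g k)}) \<and>
        (\<forall>e. fst e < n \<longrightarrow>
            (\<exists>!e'. fst e' < n \<and> e' \<noteq> e \<and> arc_end_pt g e' = arc_end_pt g e)) \<and>
        (\<forall>e e'. fst e < n \<and> fst e' < n \<and> e \<noteq> e' \<and> arc_end_pt g e' = arc_end_pt g e \<longrightarrow>
            \<not> (\<exists>c>0. arc_end_tangent g e' = c *\<^sub>R arc_end_tangent g e)))"

definition bounded_domain :: "pt2 set \<Rightarrow> bool" where
  "bounded_domain \<omega> \<longleftrightarrow> open \<omega> \<and> connected \<omega> \<and> bounded \<omega> \<and> \<omega> \<noteq> {}"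

text \<open>gamma_D: finite (nonempty) union of arcs of the boundary (injective continuous
  curves, hence of positive length/measure).\<close>
definition dirichlet_part :: "pt2 set \<Rightarrow> pt2 set \<Rightarrow> bool" where
  "dirichlet_part \<omega> \<gamma>D \<longleftrightarrow>
     (\<exists>m::nat. \<exists>h :: nat \<Rightarrow> real \<Rightarrow> pt2. 0 < m \<and>
        (\<forall>j<m. arc (h j) \<and> path_image (h j) \<subseteq> frontier \<omega>) \<and>
        \<gamma>D = (\<Union>j<m. path_image (h j)))"

definition admissible_beta :: "(real \<Rightarrow> real) \<Rightarrow> (real \<Rightarrow> real) \<Rightarrow> bool" where
  "admissible_beta \<beta> b1 \<longleftrightarrow>
     (\<exists>b2. (\<forall>t. (\<beta> has_real_derivative b1 t) (at t)) \<and>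
           (\<forall>t. (b1 has_real_derivative b2 t) (at t)) \<and> continuous_on UNIV b2 \<and>
           (\<forall>t. 0 < b1 t) \<and> (\<forall>t. b1 (t + 1) = b1 t))"

definition Cyl :: "pt2 set \<Rightarrow> pt3 set" where
  "Cyl \<omega> = {x. fst x \<in> \<omega> \<and> 0 < snd x \<and> snd x < 1}"

definition L2_on :: "pt3 set \<Rightarrow> (pt3 \<Rightarrow> complex) \<Rightarrow> bool" where
  "L2_on \<Omega> f \<longleftrightarrow> set_borel_measurable lebesgue \<Omega> f \<and>
                  set_integrable lebesgue \<Omega> (\<lambda>x. (cmod (f x))\<^sup>2)"

definition test_fun :: "pt3 set \<Rightarrow> (pt3 \<Rightarrow> real) \<Rightarrow> (pt3 \<Rightarrow> real) \<Rightarrow> (pt3 \<Rightarrow> real)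
                          \<Rightarrow> (pt3 \<Rightarrow> real) \<Rightarrow> bool" where
  "test_fun \<Omega> \<phi> \<phi>1 \<phi>2 \<phi>3 \<longleftrightarrow>
     (\<forall>x. (\<phi> has_derivative
            (\<lambda>h. fst (fst h) * \<phi>1 x + snd (fst h) * \<phi>2 x + snd h * \<phi>3 x)) (at x)) \<and>
     continuous_on UNIV \<phi>1 \<and> continuous_on UNIV \<phi>2 \<and> continuous_on UNIV \<phi>3 \<and>
     compact (closure {x. \<phi> x \<noteq> 0}) \<and> closure {x. \<phi> x \<noteq> 0} \<subseteq> \<Omega>"

definition weak_grad :: "pt3 set \<Rightarrow> (pt3 \<Rightarrow> complex) \<Rightarrow> (pt3 \<Rightarrow> complex) \<Rightarrow> (pt3 \<Rightarrow> complex)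
                           \<Rightarrow> (pt3 \<Rightarrow> complex) \<Rightarrow> bool" where
  "weak_grad \<Omega> U G1 G2 G3 \<longleftrightarrow>
     (\<forall>\<phi> \<phi>1 \<phi>2 \<phi>3. test_fun \<Omega> \<phi> \<phi>1 \<phi>2 \<phi>3 \<longrightarrow>
        (LINT x:\<Omega>|lebesgue. U x * of_real (\<phi>1 x)) = - (LINT x:\<Omega>|lebesgue. G1 x * of_real (\<phi> x)) \<and>
        (LINT x:\<Omega>|lebesgue. U x * of_real (\<phi>2 x)) = - (LINT x:\<Omega>|lebesgue. G2 x * of_real (\<phi> x)) \<and>
        (LINT x:\<Omega>|lebesgue. U x * of_real (\<phi>3 x)) = - (LINT x:\<Omega>|lebesgue. G3 x * of_real (\<phi> x)))"

definition H1_on :: "pt3 set \<Rightarrow> (pt3 \<Rightarrow> complex) \<Rightarrow> (pt3 \<Rightarrow> complex) \<Rightarrow> (pt3 \<Rightarrow> complex)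
                       \<Rightarrow> (pt3 \<Rightarrow> complex) \<Rightarrow> bool" where
  "H1_on \<Omega> U G1 G2 G3 \<longleftrightarrow> L2_on \<Omega> U \<and> L2_on \<Omega> G1 \<and> L2_on \<Omega> G2 \<and> L2_on \<Omega> G3 \<and>
                            weak_grad \<Omega> U G1 G2 G3"

definition C1_grad :: "(pt3 \<Rightarrow> complex) \<Rightarrow> (pt3 \<Rightarrow> complex) \<Rightarrow> (pt3 \<Rightarrow> complex)
                         \<Rightarrow> (pt3 \<Rightarrow> complex) \<Rightarrow> bool" where
  "C1_grad V V1 V2 V3 \<longleftrightarrow>
     (\<forall>x. (V has_derivative (\<lambda>h. of_real (fst (fst h)) * V1 x + of_real (snd (fst h)) * V2 x
                                + of_real (snd h) * V3 x)) (at x)) \<and>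
     continuous_on UNIV V1 \<and> continuous_on UNIV V2 \<and> continuous_on UNIV V3"

text \<open>H_eta: H^1(Omega) functions with zero trace on gamma_D x (0,1) and
  U(x',1) = e^{i eta} U(x',0), expressed as the H^1-closure of C^1 functions satisfying
  these conditions pointwise.\<close>
definition H_eta :: "pt2 set \<Rightarrow> pt2 set \<Rightarrow> real \<Rightarrow> (pt3 \<Rightarrow> complex) \<Rightarrow> (pt3 \<Rightarrow> complex)
                       \<Rightarrow> (pt3 \<Rightarrow> complex) \<Rightarrow> (pt3 \<Rightarrow> complex) \<Rightarrow> bool" where
  "H_eta \<omega> \<gamma>D \<eta> U G1 G2 G3 \<longleftrightarrow> H1_on (Cyl \<omega>) U G1 G2 G3 \<and>
     (\<exists>V V1 V2 V3 :: nat \<Rightarrow> pt3 \<Rightarrow> complex.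
        (\<forall>n. C1_grad (V n) (V1 n) (V2 n) (V3 n) \<and>
             (\<forall>x'\<in>\<gamma>D. \<forall>t\<in>{0..1}. V n (x', t) = 0) \<and>
             (\<forall>x'\<in>closure \<omega>. V n (x', 1) = cis \<eta> * V n (x', 0))) \<and>
        (\<lambda>n. LINT x:Cyl \<omega>|lebesgue. (cmod (U x - V n x))\<^sup>2 + (cmod (G1 x - V1 n x))\<^sup>2
                + (cmod (G2 x - V2 n x))\<^sup>2 + (cmod (G3 x - V3 n x))\<^sup>2) \<longlonglongrightarrow> 0)"

text \<open>a_{s beta, eta}[U], with nabla U = (G1,G2,G3) and d_phi = x1 d_2 - x2 d_1.\<close>
definition a_form :: "pt2 set \<Rightarrow> (real \<Rightarrow> real) \<Rightarrow> real \<Rightarrow> (pt3 \<Rightarrow> complex) \<Rightarrow> (pt3 \<Rightarrow> complex)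
                        \<Rightarrow> (pt3 \<Rightarrow> complex) \<Rightarrow> real" where
  "a_form \<omega> b1 s G1 G2 G3 =
     (LINT x:Cyl \<omega>|lebesgue. (cmod (G1 x))\<^sup>2 + (cmod (G2 x))\<^sup>2 +
        (cmod (G3 x + of_real (s * b1 (snd x)) *
               (of_real (fst (fst x)) * G2 x - of_real (snd (fst x)) * G1 x)))\<^sup>2)"

definition grad_norm_sq :: "pt2 set \<Rightarrow> (pt3 \<Rightarrow> complex) \<Rightarrow> (pt3 \<Rightarrow> complex)
                             \<Rightarrow> (pt3 \<Rightarrow> complex) \<Rightarrow> real" where
  "grad_norm_sq \<omega> G1 G2 G3 =
     (LINT x:Cyl \<omega>|lebesgue. (cmod (G1 x))\<^sup>2 + (cmod (G2 x))\<^sup>2 + (cmod (G3 x))\<^sup>2)"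

end

theory Submission
  imports Defs
begin
lemma pw:
  fixes zA zB zC :: complex and a b c s R M :: real
  assumes ha: "\<bar>a\<bar> \<le> R" and hb: "\<bar>b\<bar> \<le> R" and c0: "0 \<le> c" and cM: "c \<le> M"
    and s0: "0 \<le> s" and s1: "s \<le> 1"
  shows "\<bar>(cmod (zC + of_real (s*c) * (of_real a * zB - of_real b * zA)))\<^sup>2 - (cmod zC)\<^sup>2\<bar>
     \<le> s * (2*M*R + 2*M^2*R^2) * ((cmod zA)\<^sup>2 + (cmod zB)\<^sup>2 + (cmod zC)\<^sup>2)"
proof -
  define v where "v = of_real a * zB - of_real b * zA"
  define t where "t = s*c"
  define A where "A = cmod zA"
  define B where "B = cmod zB"
  define W where "W = cmod zC"
  define V where "V = cmod v"
  define X where "X = cmod (zC + of_real t * v)"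
  have R0: "0 \<le> R" using ha by linarith
  have M0: "0 \<le> M" using c0 cM by linarith
  have A0: "0 \<le> A" and B0: "0 \<le> B" and W0: "0 \<le> W" and V0: "0 \<le> V" and X0: "0 \<le> X"
    by (auto simp: A_def B_def W_def V_def X_def)
  have t0: "0 \<le> t" using s0 c0 by (simp add: t_def)
  have tM: "t \<le> s*M" using s0 cM by (simp add: t_def mult_left_mono)
  have "V \<le> \<bar>a\<bar> * B + \<bar>b\<bar> * A"
    unfolding V_def v_def A_def B_def
    by (metis norm_mult norm_of_real norm_triangle_ineq4)
  also have "\<dots> \<le> R * B + R * A" using ha hb A0 B0 by (intro add_mono mult_right_mono) auto
  finally have VR: "V \<le> R * (A + B)" by (simp add: algebra_simps)
  have ntv: "cmod (of_real t * v) = t * V" using t0 by (simp add: V_def norm_mult)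
  have Xu: "X \<le> W + t*V" unfolding X_def W_def using ntv norm_triangle_ineq[of zC "of_real t * v"] by simp
  have "W = cmod ((zC + of_real t * v) - of_real t * v)" by (simp add: W_def)
  also have "\<dots> \<le> X + t*V" unfolding X_def using ntv norm_triangle_ineq4[of "zC + of_real t * v" "of_real t * v"] by simp
  finally have Xl1: "W - t*V \<le> X" by simp
  have "t*V = cmod ((zC + of_real t * v) - zC)" using ntv by simp
  also have "\<dots> \<le> X + W" unfolding X_def W_def by (rule norm_triangle_ineq4)
  finally have Xl2: "t*V - W \<le> X" by simp
  have "X^2 \<le> (W + t*V)^2" using Xu X0 by (simp add: power_mono)
  moreover have "(W - t*V)^2 \<le> X^2"
  proof (cases "W \<ge> t*V")
    case True then show ?thesis using Xl1 by (simp add: power_mono)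
  next
    case False
    have "(W - t*V)^2 = (t*V - W)^2" by (simp add: power2_commute)
    also have "\<dots> \<le> X^2" using False Xl2 by (simp add: power_mono)
    finally show ?thesis .
  qed
  ultimately have zA: "X^2 - W^2 \<le> 2*t*W*V + t^2*V^2" and zB: "-(2*t*W*V) + t^2*V^2 \<le> X^2 - W^2"
    by (simp_all add: power2_eq_square algebra_simps)
  have nn: "0 \<le> t^2*V^2" by simp
  have key: "\<bar>X^2 - W^2\<bar> \<le> 2*t*W*V + t^2*V^2" using zA zB nn by linarith
  define S where "S = A^2 + B^2 + W^2"
  have AB2: "(A+B)^2 \<le> 2*(A^2+B^2)"
  proof -
    have "0 \<le> (A-B)^2" by simp
    then show ?thesis by (simp add: power2_eq_square algebra_simps)
  qed
  have WAB: "2*W*(A+B) \<le> 2*S"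
  proof -
    have "0 \<le> (W-(A+B))^2" by simp
    then have "2*W*(A+B) \<le> W^2 + (A+B)^2" by (simp add: power2_eq_square algebra_simps)
    moreover have "0 \<le> W^2" by simp
    ultimately show ?thesis using AB2 unfolding S_def distrib_left by linarith
  qed
  have t1: "2*t*W*V \<le> s*(2*M*R)*S"
  proof -
    have "2*t*W*V = t*(2*W*V)" by simp
    also have "\<dots> \<le> (s*M)*(2*W*(R*(A+B)))"
      using tM t0 W0 V0 VR by (intro mult_mono mult_left_mono) auto
    also have "\<dots> = (s*M*R)*(2*W*(A+B))" by simp
    also have "\<dots> \<le> (s*M*R)*(2*S)" using WAB s0 M0 R0 by (intro mult_left_mono) auto
    finally show ?thesis by simp
  qed
  have t2: "t^2*V^2 \<le> s*(2*M^2*R^2)*S"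
  proof -
    have "t^2 \<le> (s*M)^2" using t0 tM by (simp add: power_mono)
    also have "\<dots> = s^2 * M^2" by (simp add: power_mult_distrib)
    also have "\<dots> \<le> s*M^2" using s0 s1 by (intro mult_right_mono) (auto simp: power2_eq_square mult_left_le_one_le)
    finally have tt: "t^2 \<le> s*M^2" .
    have "V^2 \<le> (R*(A+B))^2" using VR V0 by (simp add: power_mono)
    also have "\<dots> = R^2 * (A+B)^2" by (simp add: power_mult_distrib)
    also have "\<dots> \<le> R^2 * (2*S)"
    proof (intro mult_left_mono)
      have "0 \<le> W^2" by simp
      then show "(A+B)^2 \<le> 2*S" using AB2 unfolding S_def distrib_left by linarith
    qed simp
    finally have vv: "V^2 \<le> R^2*(2*S)" .
    have "t^2*V^2 \<le> (s*M^2)*(R^2*(2*S))" using tt vv s0 by (intro mult_mono) auto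
    then show ?thesis by (simp add: algebra_simps)
  qed
  have "\<bar>X^2 - W^2\<bar> \<le> s * (2*M*R + 2*M^2*R^2) * S" using key t1 t2 by (simp add: algebra_simps)
  then show ?thesis by (simp add: X_def W_def t_def v_def S_def A_def B_def)
qed

lemma cont_meas: "continuous_on UNIV f \<Longrightarrow> f \<in> borel_measurable (lebesgue :: 'a::euclidean_space measure)"
  using continuous_imp_measurable_on_sets_lebesgue[of UNIV f] by (simp add: lebesgue_on_UNIV_eq)

definition Fint :: "(real \<Rightarrow> real) \<Rightarrow> real \<Rightarrow> (pt3 \<Rightarrow> complex) \<Rightarrow> (pt3 \<Rightarrow> complex)
                        \<Rightarrow> (pt3 \<Rightarrow> complex) \<Rightarrow> pt3 \<Rightarrow> real" where
  "Fint b1 s G1 G2 G3 x = (cmod (G1 x))\<^sup>2 + (cmod (G2 x))\<^sup>2 +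
        (cmod (G3 x + of_real (s * b1 (snd x)) *
               (of_real (fst (fst x)) * G2 x - of_real (snd (fst x)) * G1 x)))\<^sup>2"

lemma Fint_meas:
  assumes "continuous_on UNIV (b1::real\<Rightarrow>real)"
  and [measurable]: "(G1::pt3\<Rightarrow>complex) \<in> borel_measurable lebesgue" "G2 \<in> borel_measurable lebesgue" "G3 \<in> borel_measurable lebesgue"
  shows "Fint b1 s G1 G2 G3 \<in> borel_measurable lebesgue"
proof -
  have [measurable]: "(\<lambda>x::pt3. of_real (s * b1 (snd x)) :: complex) \<in> borel_measurable lebesgue"
    by (rule cont_meas, intro continuous_intros continuous_on_compose2[OF assms(1)]) auto
  have [measurable]: "(\<lambda>x::pt3. of_real (fst (fst x)) :: complex) \<in> borel_measurable lebesgue"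
    by (rule cont_meas, intro continuous_intros)
  have [measurable]: "(\<lambda>x::pt3. of_real (snd (fst x)) :: complex) \<in> borel_measurable lebesgue"
    by (rule cont_meas, intro continuous_intros)
  show ?thesis unfolding Fint_def[abs_def] by measurable
qed

lemma Fint_set_meas:
  assumes "continuous_on UNIV (b1::real\<Rightarrow>real)"
  and "set_borel_measurable lebesgue A G1" "set_borel_measurable lebesgue A G2" "set_borel_measurable lebesgue A G3"
  shows "set_borel_measurable lebesgue A (Fint b1 s G1 G2 G3)"
proof -
  have "(\<lambda>x. indicator A x *\<^sub>R Fint b1 s G1 G2 G3 x) =
     Fint b1 s (\<lambda>x. indicator A x *\<^sub>R G1 x) (\<lambda>x. indicator A x *\<^sub>R G2 x) (\<lambda>x. indicator A x *\<^sub>R G3 x)"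
    by (rule ext) (simp add: Fint_def indicator_def)
  then show ?thesis using Fint_meas[OF assms(1)] assms(2-4) unfolding set_borel_measurable_def by simp
qed

theorem lemma1:
  fixes \<omega> \<gamma>D :: "pt2 set" and \<beta> b1 :: "real \<Rightarrow> real"
  assumes "bounded_domain \<omega>" and "pw_C2_boundary_no_cusps \<omega>"
    and "dirichlet_part \<omega> \<gamma>D"
    and "admissible_beta \<beta> b1"
  shows "\<exists>C::real. \<forall>\<epsilon> \<eta> U G1 G2 G3. 0 < \<epsilon> \<and> \<epsilon> < 1 \<and> -pi \<le> \<eta> \<and> \<eta> \<le> pi \<and>
           H_eta \<omega> \<gamma>D \<eta> U G1 G2 G3 \<longrightarrow>
           \<bar>a_form \<omega> b1 \<epsilon> G1 G2 G3 - a_form \<omega> b1 0 G1 G2 G3\<bar>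
             \<le> C * \<epsilon> * grad_norm_sq \<omega> G1 G2 G3"
proof -
  have "bounded \<omega>" using assms(1) by (simp add: bounded_domain_def)
  then obtain R where R0: "0 < R" and hR: "\<And>x. x \<in> \<omega> \<Longrightarrow> norm x \<le> R"
    using bounded_pos by blast
  have hR1: "\<bar>fst x\<bar> \<le> R" "\<bar>snd x\<bar> \<le> R" if "x \<in> \<omega>" for x
  proof -
    obtain a b where x: "x = (a,b)" by force
    show "\<bar>fst x\<bar> \<le> R" using norm_fst_le[of a b] hR[OF that] x by simp
    show "\<bar>snd x\<bar> \<le> R" using norm_snd_le[of b a] hR[OF that] x by simp
  qed
  obtain b2 where db: "\<And>t. (\<beta> has_real_derivative b1 t) (at t)"
     and db1: "\<And>t. (b1 has_real_derivative b2 t) (at t)" and bpos: "\<And>t. 0 < b1 t"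
    using assms(4) unfolding admissible_beta_def by blast
  have cb: "continuous_on UNIV b1"
    by (meson DERIV_isCont continuous_at_imp_continuous_on db1)
  obtain t0 where "\<forall>y\<in>{0..1}. b1 y \<le> b1 t0"
    using continuous_attains_sup[of "{0..1::real}" b1] continuous_on_subset[OF cb] by auto
  define M where "M = b1 t0"
  have hM: "\<And>y. y \<in> {0..1} \<Longrightarrow> b1 y \<le> M" using \<open>\<forall>y\<in>{0..1}. b1 y \<le> b1 t0\<close> M_def by blast
  define K where "K = 2*M*R + 2*M^2*R^2"
  have K0: "0 \<le> K" using bpos[of t0] R0 by (simp add: K_def M_def)
  show ?thesis
  proof (intro exI[of _ K] allI impI, elim conjE)
    fix \<epsilon> \<eta> :: real and U G1 G2 G3 :: "pt3 \<Rightarrow> complex"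
    assume e0: "0 < \<epsilon>" and e1: "\<epsilon> < 1" and H: "H_eta \<omega> \<gamma>D \<eta> U G1 G2 G3"
    define \<Omega> where "\<Omega> = Cyl \<omega>"
    have L: "L2_on \<Omega> G1" "L2_on \<Omega> G2" "L2_on \<Omega> G3"
      using H unfolding H_eta_def H1_on_def \<Omega>_def by auto
    define S where "S = (\<lambda>x. (cmod (G1 x))\<^sup>2 + (cmod (G2 x))\<^sup>2 + (cmod (G3 x))\<^sup>2)"
    have intS: "set_integrable lebesgue \<Omega> S"
      using L unfolding L2_on_def S_def by (intro set_integral_add) auto
    have F0: "Fint b1 0 G1 G2 G3 = S" by (rule ext) (simp add: Fint_def S_def)
    have a0: "a_form \<omega> b1 0 G1 G2 G3 = (LINT x:\<Omega>|lebesgue. S x)"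
      unfolding a_form_def \<Omega>_def S_def by simp
    have ae: "a_form \<omega> b1 \<epsilon> G1 G2 G3 = (LINT x:\<Omega>|lebesgue. Fint b1 \<epsilon> G1 G2 G3 x)"
      unfolding a_form_def \<Omega>_def Fint_def by simp
    have gn: "grad_norm_sq \<omega> G1 G2 G3 = (LINT x:\<Omega>|lebesgue. S x)"
      unfolding grad_norm_sq_def \<Omega>_def S_def by simp
    have pt: "\<bar>Fint b1 \<epsilon> G1 G2 G3 x - S x\<bar> \<le> \<epsilon> * K * S x" if "x \<in> \<Omega>" for x
    proof -
      have x: "fst x \<in> \<omega>" "0 < snd x" "snd x < 1" using that by (auto simp: \<Omega>_def Cyl_def)
      show ?thesis
        using pw[where a="fst (fst x)" and R=R and b="snd (fst x)" and c="b1 (snd x)" and M=M and s=\<epsilon> and zC="G3 x" and zB="G2 x" and zA="G1 x"] hR1[OF x(1)]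
          bpos[of "snd x"] hM[of "snd x"] x e0 e1
        unfolding Fint_def S_def K_def by (simp add: algebra_simps)
    qed
    have Snn: "0 \<le> S x" for x by (simp add: S_def)
    have intB: "set_integrable lebesgue \<Omega> (\<lambda>x. S x + (\<epsilon> * K) * S x)"
      using intS by (intro set_integral_add) auto
    have intB2: "set_integrable lebesgue \<Omega> (\<lambda>x. S x - (\<epsilon> * K) * S x)"
      using intS by (intro set_integral_diff) auto
    have meas: "set_borel_measurable lebesgue \<Omega> (Fint b1 \<epsilon> G1 G2 G3)"
      using L cb by (intro Fint_set_meas) (auto simp: L2_on_def)
    have intF: "set_integrable lebesgue \<Omega> (Fint b1 \<epsilon> G1 G2 G3)"
    proof (rule set_integrable_bound[OF intB meas], rule AE_I2, intro impI)
      fix x assume "x \<in> \<Omega>"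
      then have "Fint b1 \<epsilon> G1 G2 G3 x \<le> S x + (\<epsilon> * K) * S x" using pt[of x] by simp
      moreover have "0 \<le> Fint b1 \<epsilon> G1 G2 G3 x" by (simp add: Fint_def)
      moreover have "0 \<le> S x + (\<epsilon> * K) * S x" using Snn[of x] e0 K0 by simp
      ultimately show "norm (Fint b1 \<epsilon> G1 G2 G3 x) \<le> norm (S x + (\<epsilon> * K) * S x)" by simp
    qed
    have up: "(LINT x:\<Omega>|lebesgue. Fint b1 \<epsilon> G1 G2 G3 x) \<le> (LINT x:\<Omega>|lebesgue. S x + (\<epsilon> * K) * S x)"
    proof (rule set_integral_mono[OF intF intB])
      fix x assume "x \<in> \<Omega>" then show "Fint b1 \<epsilon> G1 G2 G3 x \<le> S x + (\<epsilon> * K) * S x"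
        using pt[of x] unfolding abs_le_iff by linarith
    qed
    have lo: "(LINT x:\<Omega>|lebesgue. S x - (\<epsilon> * K) * S x) \<le> (LINT x:\<Omega>|lebesgue. Fint b1 \<epsilon> G1 G2 G3 x)"
    proof (rule set_integral_mono[OF intB2 intF])
      fix x assume "x \<in> \<Omega>" then show "S x - (\<epsilon> * K) * S x \<le> Fint b1 \<epsilon> G1 G2 G3 x"
        using pt[of x] unfolding abs_le_iff by linarith
    qed
    have e1': "(LINT x:\<Omega>|lebesgue. S x + (\<epsilon> * K) * S x) = (LINT x:\<Omega>|lebesgue. S x) + (\<epsilon> * K) * (LINT x:\<Omega>|lebesgue. S x)"
      using intS by (simp add: set_integral_add)
    have e2': "(LINT x:\<Omega>|lebesgue. S x - (\<epsilon> * K) * S x) = (LINT x:\<Omega>|lebesgue. S x) - (\<epsilon> * K) * (LINT x:\<Omega>|lebesgue. S x)"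
      using intS by (simp add: set_integral_diff)
    show "\<bar>a_form \<omega> b1 \<epsilon> G1 G2 G3 - a_form \<omega> b1 0 G1 G2 G3\<bar> \<le> K * \<epsilon> * grad_norm_sq \<omega> G1 G2 G3"
      unfolding ae a0 gn using up lo e1' e2' by (simp add: abs_le_iff algebra_simps)
  qed
qed

end
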